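(* Let $\epsilon>0$ and $0<p\le 1$. Every $(p,\epsilon p)$-quasirandom bipartite graph is $(2\epsilon^{1/7})$-regular.
   Context: A bipartite graph $G=(U,V;E)$ is regular if all vertices in $U$ have the same degree and all vertices in $V$ have the same degree; its density is $|E|/(|U||V|)$. $d_G(A,B)=e_G(A,B)/(|A||B|)$ for $A\subseteq U$, $B\subseteq V$, where $e_G(A,B)$ is the number of edges between $A$ and $B$. For $u,u'\in U$, $\mathrm{codeg}(u,u')$ is the number of common neighbours of $u,u'$ in $V$. A regular bipartite graph $G=(U,V;E)$ of density $p$ is $(p,\delta)$-quasirandom if all but at most $\delta|U|^2$ ordered pairs $(u,u')\in U^2$ satisfy $\mathrm{codeg}(u,u')\le(1+\delta)p^2|V|$. A bipartite graph $G=(U,V;E)$ of density $p$ is $(\epsilon)$-regular if all $A\subseteq U$, $B\subseteq V$ with $|A|\ge\epsilon|U|$, $|B|\ge\epsilon|V|$ satisfy $|d_G(A,B)-p|\le\epsilon p$. *)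

theory Defs
  imports Complex_Main
begin

definition bipartite_graph :: "'a set \<Rightarrow> 'b set \<Rightarrow> ('a \<times> 'b) set \<Rightarrow> bool" where
  "bipartite_graph U V E \<longleftrightarrow> finite U \<and> finite V \<and> E \<subseteq> U \<times> V"

definition edges_between :: "('a \<times> 'b) set \<Rightarrow> 'a set \<Rightarrow> 'b set \<Rightarrow> nat" where
  "edges_between E A B = card (E \<inter> (A \<times> B))"

definition pair_density :: "('a \<times> 'b) set \<Rightarrow> 'a set \<Rightarrow> 'b set \<Rightarrow> real" where
  "pair_density E A B = real (edges_between E A B) / (real (card A) * real (card B))"

definition bdensity :: "'a set \<Rightarrow> 'b set \<Rightarrow> ('a \<times> 'b) set \<Rightarrow> real" where
  "bdensity U V E = real (card E) / (real (card U) * real (card V))"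

definition degU :: "('a \<times> 'b) set \<Rightarrow> 'a \<Rightarrow> nat" where
  "degU E u = card {v. (u, v) \<in> E}"

definition degV :: "('a \<times> 'b) set \<Rightarrow> 'b \<Rightarrow> nat" where
  "degV E v = card {u. (u, v) \<in> E}"

definition regular_bipartite :: "'a set \<Rightarrow> 'b set \<Rightarrow> ('a \<times> 'b) set \<Rightarrow> bool" where
  "regular_bipartite U V E \<longleftrightarrow> bipartite_graph U V E \<and>
     (\<forall>u\<in>U. \<forall>u'\<in>U. degU E u = degU E u') \<and>
     (\<forall>v\<in>V. \<forall>v'\<in>V. degV E v = degV E v')"

definition codeg :: "'b set \<Rightarrow> ('a \<times> 'b) set \<Rightarrow> 'a \<Rightarrow> 'a \<Rightarrow> nat" where
  "codeg V E u u' = card {v\<in>V. (u, v) \<in> E \<and> (u', v) \<in> E}"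

definition quasirandom :: "real \<Rightarrow> real \<Rightarrow> 'a set \<Rightarrow> 'b set \<Rightarrow> ('a \<times> 'b) set \<Rightarrow> bool" where
  "quasirandom p \<delta> U V E \<longleftrightarrow> regular_bipartite U V E \<and> bdensity U V E = p \<and>
     real (card {(u, u') \<in> U \<times> U. real (codeg V E u u') > (1 + \<delta>) * p\<^sup>2 * real (card V)})
       \<le> \<delta> * real (card U)^2"

definition eps_regular :: "real \<Rightarrow> 'a set \<Rightarrow> 'b set \<Rightarrow> ('a \<times> 'b) set \<Rightarrow> bool" where
  "eps_regular \<epsilon> U V E \<longleftrightarrow> bipartite_graph U V E \<and>
     (\<forall>A B. A \<subseteq> U \<longrightarrow> B \<subseteq> V \<longrightarrow> real (card A) \<ge> \<epsilon> * real (card U) \<longrightarrow>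
        real (card B) \<ge> \<epsilon> * real (card V) \<longrightarrow>
        \<bar>pair_density E A B - bdensity U V E\<bar> \<le> \<epsilon> * bdensity U V E)"

end

theory Submission
  imports Defs "HOL-Analysis.Analysis"
begin

lemma card_filter_sum:
  assumes "finite A"
  shows "real (card {x\<in>A. P x}) = (\<Sum>x\<in>A. of_bool (P x))"
proof -
  have X: "A \<inter> {x. P x} = {x\<in>A. P x}" by blast
  have "(\<Sum>x\<in>A. of_bool (P x)) = (of_nat (card (A \<inter> {x. P x})) :: real)"
    by (rule sum_of_bool_eq) (rule assms)+
  then show ?thesis unfolding X by (rule sym)
qed

lemma card_prod_sum:
  assumes "finite A" "finite B"
  shows "real (card (S \<inter> (A \<times> B))) = (\<Sum>u\<in>A. \<Sum>v\<in>B. of_bool ((u,v)\<in>S))"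
proof -
  have fAB: "finite (A \<times> B)" using assms by blast
  have "(\<Sum>u\<in>A. \<Sum>v\<in>B. of_bool ((u,v)\<in>S)) = (\<Sum>(u,v)\<in>A\<times>B. (of_bool ((u,v)\<in>S)::real))"
    by (rule sum.cartesian_product)
  also have "\<dots> = (\<Sum>x\<in>A\<times>B. (of_bool (x\<in>S)::real))"
    by (rule sum.cong) auto
  also have "\<dots> = real (card {x\<in>A\<times>B. x\<in>S})"
    by (rule card_filter_sum[OF fAB, symmetric])
  also have "{x\<in>A\<times>B. x\<in>S} = S \<inter> (A \<times> B)" by blast
  finally show ?thesis by (rule sym)
qed

theorem lemma5p5:
  fixes U :: "'a set" and V :: "'b set" and E :: "('a \<times> 'b) set"
    and \<epsilon> p :: real
  assumes "\<epsilon> > 0" and "0 < p" and "p \<le> 1"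
    and "quasirandom p (\<epsilon> * p) U V E"
  shows "eps_regular (2 * \<epsilon> powr (1/7)) U V E"
proof -
  define c where "c = 2 * \<epsilon> powr (1/7)"
  note q = assms(4)[unfolded quasirandom_def]
  note reg = conjunct1[OF q]
  note dens = conjunct1[OF conjunct2[OF q]]
  note bad = conjunct2[OF conjunct2[OF q]]
  note reg' = reg[unfolded regular_bipartite_def]
  note bg = conjunct1[OF reg']
  note degeq = conjunct1[OF conjunct2[OF reg']]
  note bg' = bg[unfolded bipartite_graph_def]
  note fU = conjunct1[OF bg']
  note fV = conjunct1[OF conjunct2[OF bg']]
  note EUV = conjunct2[OF conjunct2[OF bg']]
  define n where "n = real (card U)"
  define m where "m = real (card V)"
  have h: "real (card E) / (n * m) = p" using dens unfolding bdensity_def n_def m_def .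
  have nm: "n * m \<noteq> 0" using h assms(2) by auto
  have n0: "n \<ge> 0" "m \<ge> 0" by (simp_all add: n_def m_def)
  have npos: "n > 0" using nm n0 by (cases "n = 0") auto
  have mpos: "m > 0" using nm n0 by (cases "m = 0") auto
  have cardE: "real (card E) = p * n * m"
  proof -
    have "real (card E) = (real (card E) / (n * m)) * (n * m)" using nm by simp
    then show ?thesis using h by (simp add: mult.assoc)
  qed
  have cpos: "c > 0" unfolding c_def using assms(1) by simp
  define r where "r = \<epsilon> powr (1/7)"
  have rpos: "r > 0" unfolding r_def using assms(1) by simp
  have c7: "c ^ 7 = 128 * \<epsilon>"
  proof -
    have "r ^ 7 = r powr (real 7)" by (rule powr_realpow[OF rpos, symmetric])
    also have "\<dots> = \<epsilon> powr (1/7 * real 7)" unfolding r_def by (rule powr_powr)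
    also have "(1/7 * real 7) = (1::real)" by simp
    also have "\<epsilon> powr 1 = \<epsilon>" using assms(1) by simp
    finally have r7: "r ^ 7 = \<epsilon>" .
    have "c ^ 7 = 2 ^ 7 * r ^ 7" unfolding c_def r_def[symmetric] by (rule power_mult_distrib)
    then show ?thesis using r7 by simp
  qed
  define I where "I u v = (of_bool ((u,v)\<in>E) :: real)" for u v
  have "card U > 0" using npos unfolding n_def by simp
  then have "U \<noteq> {}" by (simp add: card_gt_0_iff)
  then obtain u0 where u0: "u0 \<in> U" by blast
  define d where "d = real (degU E u0)"
  have degU_sum: "real (degU E u) = (\<Sum>v\<in>V. I u v)" if "u \<in> U" for u
  proof -
    have "{v. (u,v)\<in>E} = {v\<in>V. (u,v)\<in>E}" using EUV by auto
    then show ?thesis unfolding degU_def I_def using card_filter_sum[OF fV] by simp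
  qed
  have deg_d: "(\<Sum>v\<in>V. I u v) = d" if "u \<in> U" for u
  proof -
    have "degU E u = degU E u0" using degeq that u0 by blast
    then show ?thesis using degU_sum[OF that] unfolding d_def by simp
  qed
  have "real (card E) = (\<Sum>u\<in>U. \<Sum>v\<in>V. I u v)"
    using card_prod_sum[OF fU fV, of E] EUV unfolding I_def by (simp add: Int_absorb2)
  also have "\<dots> = n * d" using deg_d by (simp add: n_def)
  finally have d_eq: "d = p * m" using cardE npos by (simp add: field_simps)
  show ?thesis
    unfolding eps_regular_def c_def[symmetric]
  proof (intro conjI allI impI bg)
    fix A B assume AU: "A \<subseteq> U" and BV: "B \<subseteq> V"
      and Ac: "c * real (card U) \<le> real (card A)" and Bc: "c * real (card V) \<le> real (card B)"
    have fA: "finite A" using AU fU finite_subset by blast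
    have fB: "finite B" using BV fV finite_subset by blast
    define a where "a = real (card A)"
    define b where "b = real (card B)"
    have an: "a \<le> n" unfolding a_def n_def using AU fU by (simp add: card_mono)
    have Ac': "c * n \<le> a" using Ac unfolding a_def n_def .
    have Bc': "c * m \<le> b" using Bc unfolding b_def m_def .
    have apos: "a > 0" using Ac' cpos npos by (smt (verit) mult_pos_pos)
    have bpos: "b > 0" using Bc' cpos mpos by (smt (verit) mult_pos_pos)
    have c1: "c \<le> 1"
    proof (rule ccontr)
      assume "\<not> c \<le> 1"
      then have "c * n > n" using npos by simp
      then show False using Ac' an by simp
    qed
    define f where "f v = (\<Sum>u\<in>A. I u v)" for v
    have e_sum: "real (edges_between E A B) = (\<Sum>v\<in>B. f v)"
    proof -
      have "real (edges_between E A B) = (\<Sum>u\<in>A. \<Sum>v\<in>B. I u v)"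
        unfolding edges_between_def I_def by (rule card_prod_sum[OF fA fB])
      also have "\<dots> = (\<Sum>v\<in>B. \<Sum>u\<in>A. I u v)" by (rule sum.swap)
      finally show ?thesis unfolding f_def .
    qed
    have sumf: "(\<Sum>v\<in>V. f v) = a * p * m"
    proof -
      have "(\<Sum>v\<in>V. f v) = (\<Sum>u\<in>A. \<Sum>v\<in>V. I u v)" unfolding f_def by (rule sum.swap)
      also have "\<dots> = (\<Sum>u\<in>A. d)" using deg_d AU by (intro sum.cong) auto
      finally show ?thesis using d_eq by (simp add: a_def)
    qed
    define Q where "Q = (\<Sum>u\<in>A. \<Sum>u'\<in>A. real (codeg V E u u'))"
    have codeg_sum: "real (codeg V E u u') = (\<Sum>v\<in>V. I u v * I u' v)" for u u'
      unfolding codeg_def I_def using card_filter_sum[OF fV] by (simp add: of_bool_conj)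
    have sumf2: "(\<Sum>v\<in>V. (f v)\<^sup>2) = Q"
    proof -
      have "(\<Sum>v\<in>V. (f v)\<^sup>2) = (\<Sum>v\<in>V. \<Sum>u\<in>A. \<Sum>u'\<in>A. I u v * I u' v)"
        unfolding f_def power2_eq_square by (simp add: sum_product)
      also have "\<dots> = (\<Sum>u\<in>A. \<Sum>v\<in>V. \<Sum>u'\<in>A. I u v * I u' v)" by (rule sum.swap)
      also have "\<dots> = (\<Sum>u\<in>A. \<Sum>u'\<in>A. \<Sum>v\<in>V. I u v * I u' v)"
        by (intro sum.cong refl sum.swap)
      finally show ?thesis unfolding Q_def codeg_sum by simp
    qed
    define T where "T = (1 + \<epsilon>*p) * p\<^sup>2 * m"
    define Bad where "Bad = {(u, u') \<in> U \<times> U. real (codeg V E u u') > T}"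
    have badc: "real (card Bad) \<le> \<epsilon> * p * n\<^sup>2"
      using bad unfolding Bad_def T_def m_def n_def by simp
    have codeg_le: "real (codeg V E u u') \<le> p * m" if "u \<in> U" for u u'
    proof -
      have "real (codeg V E u u') = (\<Sum>v\<in>V. I u v * I u' v)" by (rule codeg_sum)
      also have "\<dots> \<le> (\<Sum>v\<in>V. I u v)" by (intro sum_mono) (auto simp: I_def)
      finally show ?thesis using deg_d[OF that] d_eq by simp
    qed
    have Qle: "Q \<le> a\<^sup>2 * T + p * m * (\<epsilon> * p * n\<^sup>2)"
    proof -
      have "Q = (\<Sum>x\<in>A\<times>A. real (codeg V E (fst x) (snd x)))"
        unfolding Q_def by (simp add: sum.cartesian_product case_prod_beta)
      also have "\<dots> \<le> (\<Sum>x\<in>A\<times>A. T + p * m * of_bool (x \<in> Bad))"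
      proof (intro sum_mono)
        fix x assume x: "x \<in> A \<times> A"
        then have xu: "fst x \<in> U" "snd x \<in> U" using AU by auto
        show "real (codeg V E (fst x) (snd x)) \<le> T + p * m * of_bool (x \<in> Bad)"
        proof (cases "x \<in> Bad")
          case True
          have "T \<ge> 0" unfolding T_def using assms mpos by simp
          have "real (codeg V E (fst x) (snd x)) \<le> p * m" by (rule codeg_le[OF xu(1)])
          then have "real (codeg V E (fst x) (snd x)) \<le> T + p * m" using \<open>T \<ge> 0\<close> by linarith
          then show ?thesis using True by simp
        next
          case False
          then show ?thesis using xu unfolding Bad_def by (auto simp: case_prod_beta)
        qed
      qed
      also have "\<dots> = a\<^sup>2 * T + p * m * real (card ((A\<times>A) \<inter> Bad))"
        using fA by (simp add: sum.distrib sum_distrib_left[symmetric] card_cartesian_product a_def power2_eq_square Int_def)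
      also have "\<dots> \<le> a\<^sup>2 * T + p * m * (\<epsilon> * p * n\<^sup>2)"
      proof -
        have "card ((A\<times>A) \<inter> Bad) \<le> card Bad"
          by (rule card_mono) (auto simp: Bad_def intro: finite_subset[OF _ finite_cartesian_product[OF fU fU]])
        then have "real (card ((A\<times>A) \<inter> Bad)) \<le> \<epsilon> * p * n\<^sup>2" using badc by linarith
        then show ?thesis using assms mpos by (intro add_left_mono mult_left_mono) auto
      qed
      finally show ?thesis .
    qed
    define S where "S = (\<Sum>v\<in>V. (f v - p * a)\<^sup>2)"
    have S_eq: "S = Q - p\<^sup>2 * a\<^sup>2 * m"
    proof -
      have "S = (\<Sum>v\<in>V. (f v)\<^sup>2) - 2 * p * a * (\<Sum>v\<in>V. f v) + m * (p * a)\<^sup>2"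
      proof -
        have "S = (\<Sum>v\<in>V. (f v)\<^sup>2 - (2 * p * a) * f v + (p * a)\<^sup>2)"
          unfolding S_def by (intro sum.cong refl) (simp add: power2_diff mult_ac)
        also have "\<dots> = (\<Sum>v\<in>V. (f v)\<^sup>2) - (\<Sum>v\<in>V. (2 * p * a) * f v) + (\<Sum>v\<in>V. (p * a)\<^sup>2)"
          by (simp add: sum.distrib sum_subtractf)
        also have "\<dots> = (\<Sum>v\<in>V. (f v)\<^sup>2) - 2 * p * a * (\<Sum>v\<in>V. f v) + m * (p * a)\<^sup>2"
          by (simp add: sum_distrib_left m_def)
        finally show ?thesis .
      qed
      then show ?thesis using sumf sumf2 by (simp add: power2_eq_square algebra_simps)
    qed
    have S_le: "S \<le> 2 * \<epsilon> * p\<^sup>2 * n\<^sup>2 * m"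
    proof -
      have "S \<le> \<epsilon> * p^3 * a\<^sup>2 * m + \<epsilon> * p\<^sup>2 * n\<^sup>2 * m"
        using S_eq Qle unfolding T_def by (simp add: algebra_simps power2_eq_square power3_eq_cube)
      also have "\<epsilon> * p^3 * a\<^sup>2 * m \<le> \<epsilon> * p\<^sup>2 * n\<^sup>2 * m"
      proof -
        have "p^3 * a\<^sup>2 \<le> p\<^sup>2 * n\<^sup>2"
        proof -
          have "p^3 \<le> p\<^sup>2" using assms(2,3) by (simp add: power3_eq_cube power2_eq_square)
          moreover have "a\<^sup>2 \<le> n\<^sup>2" using an apos by (simp add: power_mono)
          ultimately show ?thesis by (intro mult_mono) auto
        qed
        then show ?thesis using assms(1) mpos by (simp add: mult.assoc mult_left_mono mult_right_mono)
      qed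
      finally show ?thesis by (simp add: mult_ac)
    qed
    define D where "D = real (edges_between E A B) - p * a * b"
    have D_sum: "D = (\<Sum>v\<in>B. f v - p * a)"
      unfolding D_def e_sum by (simp add: sum_subtractf b_def)
    have "D\<^sup>2 \<le> (\<Sum>v\<in>B. (f v - p * a)\<^sup>2) * b"
      unfolding D_sum b_def by (rule sum_squared_le_sum_of_squares)
    also have "(\<Sum>v\<in>B. (f v - p * a)\<^sup>2) \<le> S"
      unfolding S_def using BV fV by (intro sum_mono2) auto
    finally have D2: "D\<^sup>2 \<le> S * b" using bpos by (smt (verit) mult_right_mono)
    have key: "2 * \<epsilon> * n\<^sup>2 * m \<le> c\<^sup>2 * a\<^sup>2 * b"
    proof -
      have "c ^ 5 \<ge> c ^ 7" using c1 cpos by (simp add: power_decreasing)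
      then have "2 * \<epsilon> \<le> c^5" using c7 assms(1) by simp
      then have "2 * \<epsilon> * n\<^sup>2 * m \<le> c^5 * n\<^sup>2 * m" using npos mpos by simp
      also have "\<dots> = c\<^sup>2 * (c * n)\<^sup>2 * (c * m)" by (simp add: power2_eq_square power_def)
      also have "\<dots> \<le> c\<^sup>2 * a\<^sup>2 * b"
      proof -
        have "(c*n)\<^sup>2 \<le> a\<^sup>2" using Ac' cpos npos by (intro power_mono) auto
        then show ?thesis using Bc' cpos mpos apos
          by (intro mult_mono mult_left_mono) auto
      qed
      finally show ?thesis .
    qed
    have "D\<^sup>2 \<le> (c * p * a * b)\<^sup>2"
    proof -
      have "D\<^sup>2 \<le> 2 * \<epsilon> * p\<^sup>2 * n\<^sup>2 * m * b" using D2 S_le bpos by (smt (verit) mult_right_mono)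
      also have "\<dots> = p\<^sup>2 * b * (2 * \<epsilon> * n\<^sup>2 * m)" by simp
      also have "\<dots> \<le> p\<^sup>2 * b * (c\<^sup>2 * a\<^sup>2 * b)" using key bpos by (intro mult_left_mono) auto
      also have "\<dots> = (c * p * a * b)\<^sup>2" by (simp add: power2_eq_square)
      finally show ?thesis .
    qed
    then have absD: "\<bar>D\<bar> \<le> c * p * a * b"
    proof -
      assume D2': "D\<^sup>2 \<le> (c * p * a * b)\<^sup>2"
      have nn: "0 \<le> c * p * a * b" using cpos assms(2) apos bpos by simp
      have "\<bar>D\<bar>\<^sup>2 \<le> (c * p * a * b)\<^sup>2" using D2' by (simp only: power2_abs)
      then show ?thesis using nn by (rule power2_le_imp_le)
    qed
    have ab: "a * b > 0" using apos bpos by simp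
    have pd: "pair_density E A B = real (edges_between E A B) / (a * b)"
      unfolding pair_density_def a_def b_def ..
    have "D / (a * b) = real (edges_between E A B) / (a * b) - (p * a * b) / (a * b)"
      unfolding D_def by (rule diff_divide_distrib)
    also have "(p * a * b) / (a * b) = p" using apos bpos by simp
    finally have "pair_density E A B - bdensity U V E = D / (a * b)"
      using pd dens by simp
    then have "\<bar>pair_density E A B - bdensity U V E\<bar> = \<bar>D\<bar> / (a * b)"
      using ab by simp
    also have "\<dots> \<le> c * p"
    proof -
      have "\<bar>D\<bar> \<le> c * p * (a * b)" using absD by (simp only: mult.assoc)
      then show ?thesis using ab by (simp only: pos_divide_le_eq)
    qed
    finally show "\<bar>pair_density E A B - bdensity U V E\<bar> \<le> c * bdensity U V E" using dens by simp
  qed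
qed

end
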